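(* Let $I\subset\mathbb{R}$ be an interval, let $1\le p\le\infty$, and let $f\in W^{1,p}(I)$ be a continuous real-valued function. Then $$\dim_{A,reg}^\theta\operatorname{Graph}(f)\le 1+\frac{\theta}{(1-\theta)p}$$ for all $0<\theta<\tfrac{p}{p+1}$ (interpreting $\tfrac{p}{p+1}=1$ and $\tfrac{\theta}{(1-\theta)p}=0$ when $p=\infty$).
   Context: Here $f\in W^{1,p}(I)$ means that $f$ has a weak derivative $f'$ which is a function with $f'\in L^p(I)$ (no integrability condition on $f$ itself is imposed). $\operatorname{Graph}(f)=\{(t,f(t)):t\in I\}$. For a bounded set $F\subset\mathbb{R}^2$ and $r>0$, $N(F,r)$ is the least number of sets of diameter at most $r$ needed to cover $F$; $D(\mathbf z,R)$ is the closed disc of radius $R$ centered at $\mathbf z$. For $E\subset\mathbb{R}^2$ and $\theta\in(0,1)$, $$\dim_{A,reg}^\theta(E)=\inf\{\gamma>0:\ \exists C>0 \text{ s.t. } N(D(\mathbf z,R)\cap E,r)\le C(R/r)^\gamma \text{ for all } 0<r\le R^{1/\theta}<R<1,\ \mathbf z\in E\}.$$ *)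

theory Defs
  imports "HOL-Analysis.Analysis"
begin

definition smooth_fun :: "(real \<Rightarrow> real) \<Rightarrow> bool" where
  "smooth_fun \<phi> \<longleftrightarrow> (\<forall>k::nat. \<forall>x. ((deriv ^^ k) \<phi>) differentiable (at x))"

definition test_fun :: "real set \<Rightarrow> (real \<Rightarrow> real) \<Rightarrow> bool" where
  "test_fun U \<phi> \<longleftrightarrow> smooth_fun \<phi> \<and> compact (closure {x. \<phi> x \<noteq> 0})
      \<and> closure {x. \<phi> x \<noteq> 0} \<subseteq> U"

definition weak_deriv :: "(real \<Rightarrow> real) \<Rightarrow> (real \<Rightarrow> real) \<Rightarrow> real set \<Rightarrow> bool" where
  "weak_deriv f g I \<longleftrightarrow> (\<forall>\<phi>. test_fun (interior I) \<phi> \<longrightarrow>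
      integrable lebesgue (\<lambda>x. f x * deriv \<phi> x) \<and>
      integrable lebesgue (\<lambda>x. g x * \<phi> x) \<and>
      (\<integral>x. f x * deriv \<phi> x \<partial>lebesgue) = - (\<integral>x. g x * \<phi> x \<partial>lebesgue))"

definition in_Lp :: "ereal \<Rightarrow> real set \<Rightarrow> (real \<Rightarrow> real) \<Rightarrow> bool" where
  "in_Lp p I g \<longleftrightarrow> g \<in> borel_measurable (lebesgue_on I) \<and>
     (if p = \<infinity> then (\<exists>C. AE x in lebesgue_on I. \<bar>g x\<bar> \<le> C)
      else integrable (lebesgue_on I) (\<lambda>x. \<bar>g x\<bar> powr real_of_ereal p))"

definition in_W1p :: "ereal \<Rightarrow> real set \<Rightarrow> (real \<Rightarrow> real) \<Rightarrow> bool" where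
  "in_W1p p I f \<longleftrightarrow> (\<exists>g. weak_deriv f g I \<and> in_Lp p I g)"

definition graph :: "real set \<Rightarrow> (real \<Rightarrow> real) \<Rightarrow> (real \<times> real) set" where
  "graph I f = (\<lambda>t. (t, f t)) ` I"

text \<open>Covering number N(F,r): least number of sets of diameter at most r covering F.
  (Sets are required bounded so that the diameter is meaningful.)\<close>
definition cover_num :: "(real \<times> real) set \<Rightarrow> real \<Rightarrow> nat" where
  "cover_num F r = (LEAST n. \<exists>C. finite C \<and> card C = n \<and>
      (\<forall>U\<in>C. bounded U \<and> diameter U \<le> r) \<and> F \<subseteq> \<Union>C)"

text \<open>Regularised Assouad spectrum (value in extended reals; Inf of the empty set is \<infinity>).\<close>
definition assouad_reg :: "real \<Rightarrow> (real \<times> real) set \<Rightarrow> ereal" where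
  "assouad_reg \<theta> E = (INF \<gamma>\<in>{\<gamma>::real. \<gamma> > 0 \<and> (\<exists>C>0. \<forall>r R z.
        0 < r \<and> 0 < R \<and> r \<le> R powr (1/\<theta>) \<and> R powr (1/\<theta>) < R \<and> R < 1 \<and> z \<in> E \<longrightarrow>
        real (cover_num (cball z R \<inter> E) r) \<le> C * (R / r) powr \<gamma>)}. ereal \<gamma>)"

end

theory Submission
  imports Defs "HOL-Computational_Algebra.Polynomial"
begin

definition wq :: "real \<Rightarrow> real" where "wq t = t * (1 - t)"

lemma wq_deriv: "(wq has_real_derivative (1 - 2*t)) (at t)"
  unfolding wq_def by (auto intro!: derivative_eq_intros simp: algebra_simps)

lemma formula_deriv:
  fixes Q :: "real poly"
  assumes "wq t \<noteq> 0"
  shows "((\<lambda>t. poly Q t / (wq t)^m * exp (- 1 / wq t)) has_real_derivative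
     ((poly (pderiv Q) t * (wq t)^2 - real m * poly Q t * (1 - 2*t) * wq t + poly Q t * (1 - 2*t))
       / (wq t)^(m+2) * exp (- 1 / wq t))) (at t)"
using assms
  apply (auto intro!: derivative_eq_intros wq_deriv poly_DERIV)
  apply (cases m)
   apply (auto simp: field_simps power2_eq_square)
  done

lemma exp_ge_pow_fact:
  fixes x :: real assumes "0 \<le> x"
  shows "x ^ n / fact n \<le> exp x"
proof -
  have s: "summable (\<lambda>n. x ^ n /\<^sub>R fact n)" by (rule summable_exp_generic)
  have "sum (\<lambda>n. x ^ n /\<^sub>R fact n) {n} \<le> (\<Sum>n. x ^ n /\<^sub>R fact n)"
    by (rule sum_le_suminf[OF s]) (use assms in auto)
  then show ?thesis by (simp add: exp_def divide_inverse mult.commute)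
qed
lemma exp_neg_inv_bound:
  fixes w :: real assumes w0: "0 < w"
  shows "exp (- 1 / w) / w ^ m \<le> fact (m+2) * w^2"
proof -
  define n where "n = m + 2"
  have "(1/w) ^ n / fact n \<le> exp (1/w)" by (rule exp_ge_pow_fact) (use w0 in simp)
  then have "(1/w) ^ n \<le> exp (1/w) * fact n" by (simp add: pos_divide_le_eq)
  then have "(1/w) ^ n * exp (- 1 / w) \<le> exp (1/w) * fact n * exp (- 1 / w)"
    by (rule mult_right_mono) simp
  also have "\<dots> = fact n" by (simp add: mult.commute[of "exp (1/w)"] mult.assoc flip: exp_add)
  finally have 1: "(1/w) ^ n * exp (- 1 / w) \<le> fact n" .
  have "exp (- 1 / w) / w ^ m = (1/w) ^ n * exp (- 1 / w) * w^2"
    using w0 by (simp add: n_def power_add power_one_over field_simps power2_eq_square)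
  also have "\<dots> \<le> fact n * w^2" by (rule mult_right_mono[OF 1]) simp
  finally show ?thesis by (simp add: n_def)
qed

definition Wp :: "real poly" where "Wp = [:0, 1, -1:]"

lemma poly_Wp[simp]: "poly Wp t = wq t" unfolding Wp_def wq_def by (simp add: algebra_simps)
lemma poly_pderiv_Wp[simp]: "poly (pderiv Wp) t = 1 - 2*t"
  unfolding Wp_def by (simp add: pderiv_pCons algebra_simps)

fun Qp :: "nat \<Rightarrow> real poly" where
  "Qp 0 = 1"
| "Qp (Suc k) = pderiv (Qp k) * Wp^2 - smult (of_nat (2*k)) (Qp k * pderiv Wp * Wp) + Qp k * pderiv Wp"

definition Ek :: "nat \<Rightarrow> real \<Rightarrow> real" where
  "Ek k t = (if 0 < t \<and> t < 1 then poly (Qp k) t / (wq t)^(2*k) * exp (- 1 / wq t) else 0)"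

lemma wq_pos: "0 < t \<Longrightarrow> t < 1 \<Longrightarrow> 0 < wq t" unfolding wq_def by simp

lemma Ek_deriv_inner:
  assumes "0 < t" "t < 1"
  shows "(Ek k has_real_derivative Ek (Suc k) t) (at t)"
proof -
  have w: "wq t \<noteq> 0" using wq_pos[OF assms] by simp
  have "((\<lambda>t. poly (Qp k) t / (wq t)^(2*k) * exp (- 1 / wq t)) has_real_derivative Ek (Suc k) t) (at t)"
    using formula_deriv[OF w, of "Qp k" "2*k"] assms
    by (simp add: Ek_def algebra_simps power2_eq_square)
  then show ?thesis
    by (rule has_field_derivative_transform_within_open[where S="{0<..<1}"]) (use assms in \<open>auto simp: Ek_def\<close>)
qed

lemma Ek_bound: "\<exists>B\<ge>0. \<forall>t. \<bar>Ek k t\<bar> \<le> B * t^2 \<and> \<bar>Ek k t\<bar> \<le> B * (t - 1)^2"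
proof -
  obtain B0 where B0: "\<And>t. t \<in> {0..1} \<Longrightarrow> \<bar>poly (Qp k) t\<bar> \<le> B0"
  proof -
    have "compact (poly (Qp k) ` {0..1})"
      by (rule compact_continuous_image) (auto intro: continuous_intros)
    then obtain B where "\<forall>y\<in>poly (Qp k) ` {0..1}. norm y \<le> B"
      using compact_imp_bounded bounded_iff by metis
    then show ?thesis using that[of B] by auto
  qed
  define B where "B = max 0 B0 * fact (2*k+2)"
  have B0': "\<bar>poly (Qp k) t\<bar> \<le> max 0 B0" if "t \<in> {0..1}" for t using B0[OF that] by simp
  have main: "\<bar>Ek k t\<bar> \<le> B * (wq t)^2" if t: "0 < t" "t < 1" for t
  proof -
    define w where "w = wq t"
    have w0: "0 < w" using wq_pos[OF t] w_def by simp
    have e2: "exp (- 1 / w) / w ^ (2*k) \<le> fact (2*k+2) * w^2"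
      by (rule exp_neg_inv_bound[OF w0])
    have "\<bar>Ek k t\<bar> = \<bar>poly (Qp k) t\<bar> * (exp (- 1 / w) / w ^ (2*k))"
      using t w0 by (simp add: Ek_def w_def abs_mult)
    also have "\<dots> \<le> max 0 B0 * (fact (2*k+2) * w^2)"
      by (intro mult_mono B0' e2) (use t in auto)
    finally show ?thesis by (simp add: B_def w_def)
  qed
  have "B \<ge> 0" by (simp add: B_def)
  moreover have "\<bar>Ek k t\<bar> \<le> B * t^2 \<and> \<bar>Ek k t\<bar> \<le> B * (t - 1)^2" for t
  proof (cases "0 < t \<and> t < 1")
    case True
    have a: "0 \<le> wq t" "wq t \<le> t" "wq t \<le> 1 - t" using True
      by (auto simp: wq_def mult_le_cancel_left1 mult_le_cancel_right1)
    have "(wq t)^2 \<le> t^2" "(wq t)^2 \<le> (1-t)^2" using a by (auto intro: power_mono)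
    moreover have "(1-t)^2 = (t-1)^2" by (simp add: power2_commute)
    ultimately have "(wq t)^2 \<le> t^2" "(wq t)^2 \<le> (t-1)^2" by auto
    with main[of t] True \<open>B \<ge> 0\<close> show ?thesis
      by (meson mult_left_mono order_trans)
  next
    case False
    then have "Ek k t = 0" unfolding Ek_def by auto
    then show ?thesis using \<open>B \<ge> 0\<close> by simp
  qed
  ultimately show ?thesis by blast
qed

lemma deriv_zero_sq:
  fixes h :: "real \<Rightarrow> real"
  assumes "h t0 = 0" "\<And>t. \<bar>h t\<bar> \<le> B * (t - t0)^2"
  shows "(h has_real_derivative 0) (at t0)"
proof -
  have "((\<lambda>y. (h y - h t0) / (y - t0)) \<longlongrightarrow> 0) (at t0)"
  proof (rule Lim_null_comparison)
    show "\<forall>\<^sub>F y in at t0. norm ((h y - h t0) / (y - t0)) \<le> \<bar>B\<bar> * \<bar>y - t0\<bar>"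
    proof (rule always_eventually, rule allI)
      fix y
      show "norm ((h y - h t0) / (y - t0)) \<le> \<bar>B\<bar> * \<bar>y - t0\<bar>"
      proof (cases "y = t0")
        case False
        have sq: "(y - t0)^2 = \<bar>y - t0\<bar> * \<bar>y - t0\<bar>" by (simp add: power2_eq_square abs_mult_self_eq)
        have "B * (y - t0)^2 \<le> \<bar>B\<bar> * (y - t0)^2" by (rule mult_right_mono) auto
        then have hy: "\<bar>h y\<bar> \<le> \<bar>B\<bar> * \<bar>y - t0\<bar> * \<bar>y - t0\<bar>"
          using assms(2)[of y] sq by (simp add: mult.assoc)
        have pos: "0 < \<bar>y - t0\<bar>" using False by simp
        have "norm ((h y - h t0) / (y - t0)) = \<bar>h y\<bar> / \<bar>y - t0\<bar>"
          using assms(1) by (simp add: abs_divide)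
        also have "\<dots> \<le> \<bar>B\<bar> * \<bar>y - t0\<bar>" using hy pos by (simp add: pos_divide_le_eq)
        finally show ?thesis .
      qed simp
    qed
    show "((\<lambda>y. \<bar>B\<bar> * \<bar>y - t0\<bar>) \<longlongrightarrow> 0) (at t0)"
      by (rule tendsto_eq_intros refl | simp)+
  qed
  then show ?thesis using assms(1) by (simp add: has_field_derivative_iff)
qed

lemma Ek_deriv: "(Ek k has_real_derivative Ek (Suc k) t) (at t)"
proof -
  consider "0 < t \<and> t < 1" | "t < 0" | "t > 1" | "t = 0" | "t = 1" by linarith
  then show ?thesis
  proof cases
    case 1 then show ?thesis using Ek_deriv_inner by auto
  next
    case 2
    have "((\<lambda>_. 0) has_real_derivative 0) (at t)" by simp
    then have "(Ek k has_real_derivative 0) (at t)"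
      by (rule has_field_derivative_transform_within_open[where S="{..<0}"]) (use 2 in \<open>auto simp: Ek_def\<close>)
    then show ?thesis using 2 by (simp add: Ek_def)
  next
    case 3
    have "((\<lambda>_. 0) has_real_derivative 0) (at t)" by simp
    then have "(Ek k has_real_derivative 0) (at t)"
      by (rule has_field_derivative_transform_within_open[where S="{1<..}"]) (use 3 in \<open>auto simp: Ek_def\<close>)
    then show ?thesis using 3 by (simp add: Ek_def)
  next
    case 4
    obtain B where "\<forall>t. \<bar>Ek k t\<bar> \<le> B * t^2 \<and> \<bar>Ek k t\<bar> \<le> B * (t - 1)^2" using Ek_bound by blast
    then have "(Ek k has_real_derivative 0) (at 0)"
      by (intro deriv_zero_sq[where B=B]) (auto simp: Ek_def)
    then show ?thesis using 4 by (simp add: Ek_def)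
  next
    case 5
    obtain B where "\<forall>t. \<bar>Ek k t\<bar> \<le> B * t^2 \<and> \<bar>Ek k t\<bar> \<le> B * (t - 1)^2" using Ek_bound by blast
    then have "(Ek k has_real_derivative 0) (at 1)"
      by (intro deriv_zero_sq[where B=B]) (auto simp: Ek_def)
    then show ?thesis using 5 by (simp add: Ek_def)
  qed
qed

definition dseq :: "(nat \<Rightarrow> real \<Rightarrow> real) \<Rightarrow> bool" where
  "dseq F \<longleftrightarrow> (\<forall>k t. (F k has_real_derivative F (Suc k) t) (at t))"

lemma dseq_deriv: "dseq F \<Longrightarrow> (deriv ^^ k) (F 0) = F k"
proof (induction k)
  case (Suc k)
  have "deriv (F k) = F (Suc k)"
    using Suc.prems by (auto simp: dseq_def intro!: ext DERIV_imp_deriv)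
  then show ?case using Suc by simp
qed simp

lemma dseq_smooth: "dseq F \<Longrightarrow> smooth_fun (F 0)"
  unfolding smooth_fun_def
proof (intro allI)
  fix k x assume F: "dseq F"
  then have "(F k has_real_derivative F (Suc k) x) (at x)" by (simp add: dseq_def)
  then have "F k differentiable (at x)" unfolding real_differentiable_def by blast
  then show "(deriv ^^ k) (F 0) differentiable (at x)" by (simp add: dseq_deriv[OF F])
qed

lemma dseq_Ek: "dseq Ek" unfolding dseq_def using Ek_deriv by blast

lemma dseq_cmult: "dseq F \<Longrightarrow> dseq (\<lambda>k t. c * F k t)"
  unfolding dseq_def using DERIV_cmult by blast

lemma dseq_diff: "dseq F \<Longrightarrow> dseq G \<Longrightarrow> dseq (\<lambda>k t. F k t - G k t)"
  unfolding dseq_def using DERIV_diff by blast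

lemma dseq_affine: "dseq F \<Longrightarrow> dseq (\<lambda>k t. a^k * F k (a*t + b))"
  unfolding dseq_def
proof (intro allI)
  fix k t assume F: "\<forall>k t. (F k has_real_derivative F (Suc k) t) (at t)"
  have "((\<lambda>t. F k (a*t + b)) has_real_derivative F (Suc k) (a*t+b) * a) (at t)"
  proof -
    have g: "((\<lambda>t. a*t+b) has_real_derivative a) (at t)" by (auto intro!: derivative_eq_intros)
    show ?thesis using DERIV_chain2[OF F[rule_format, of k "a*t+b"] g] by simp
  qed
  from DERIV_cmult[OF this, of "a^k"]
  show "((\<lambda>t. a^k * F k (a*t + b)) has_real_derivative a^Suc k * F (Suc k) (a*t + b)) (at t)"
    by (simp add: algebra_simps)
qed

lemma dseq_anti:
  assumes "dseq F" "\<And>t. (P has_real_derivative F 0 t) (at t)"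
  shows "dseq (\<lambda>k. case k of 0 \<Rightarrow> P | Suc j \<Rightarrow> F j)"
  using assms unfolding dseq_def by (auto split: nat.splits)

lemma Ek_cont: "continuous_on S (Ek k)"
  by (rule continuous_at_imp_continuous_on) (use Ek_deriv DERIV_isCont in blast)

lemma Ek0_nonneg: "0 \<le> Ek 0 t" by (simp add: Ek_def)
lemma Ek_out: "t \<le> 0 \<or> 1 \<le> t \<Longrightarrow> Ek k t = 0" by (auto simp: Ek_def)

definition G0 :: "real \<Rightarrow> real" where "G0 v = integral {-1..v} (Ek 0)"

lemma G0_deriv: "(G0 has_real_derivative Ek 0 v) (at v)"
proof (cases "v < -1/2")
  case True
  have z: "G0 u = 0" if "u < 0" for u
  proof -
    have "integral {-1..u} (Ek 0) = integral {-1..u} (\<lambda>_. 0::real)"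
      by (rule integral_cong) (use that in \<open>auto intro: Ek_out\<close>)
    then show ?thesis by (simp add: G0_def)
  qed
  have "((\<lambda>_. 0) has_real_derivative 0) (at v)" by simp
  then have "(G0 has_real_derivative 0) (at v)"
    by (rule has_field_derivative_transform_within_open[where S="{..<0}"]) (use True z in auto)
  moreover have "Ek 0 v = 0" using True Ek_out by auto
  ultimately show ?thesis by simp
next
  case False
  have "((\<lambda>u. integral {-1..u} (Ek 0)) has_vector_derivative Ek 0 v) (at v within {-1..v+1})"
    by (rule integral_has_vector_derivative) (use False Ek_cont in auto)
  then have "((\<lambda>u. integral {-1..u} (Ek 0)) has_vector_derivative Ek 0 v) (at v)"
    using False by (subst (asm) at_within_interior) auto
  moreover have "G0 = (\<lambda>u. integral {-1..u} (Ek 0))" by (rule ext) (simp add: G0_def)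
  ultimately show ?thesis by (simp add: has_real_derivative_iff_has_vector_derivative)
qed

lemma G0_diff: "u \<le> v \<Longrightarrow> (Ek 0 has_integral (G0 v - G0 u)) {u..v}"
  using G0_deriv
  by (intro fundamental_theorem_of_calculus)
     (auto simp: has_real_derivative_iff_has_vector_derivative intro: has_vector_derivative_at_within)

lemma G0_zero: "v \<le> 0 \<Longrightarrow> G0 v = 0"
proof -
  assume v: "v \<le> 0"
  have "integral {-1..v} (Ek 0) = integral {-1..v} (\<lambda>_. 0::real)"
    by (rule integral_cong) (use v in \<open>auto intro: Ek_out\<close>)
  then show ?thesis by (simp add: G0_def)
qed

lemma G0_mono: "u \<le> v \<Longrightarrow> G0 u \<le> G0 v"
  using G0_diff[of u v] has_integral_nonneg[of "Ek 0" "G0 v - G0 u" "{u..v}"] Ek0_nonneg by auto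

lemma G0_const: "1 \<le> v \<Longrightarrow> G0 v = G0 1"
proof -
  assume v: "1 \<le> v"
  have "(Ek 0 has_integral (G0 v - G0 1)) {1..v}" using G0_diff v by simp
  moreover have "((\<lambda>_. 0::real) has_integral 0) {1..v}" by simp
  moreover have "(Ek 0 has_integral 0) {1..v}"
    by (rule has_integral_is_0) (simp add: Ek_out)
  ultimately have "G0 v - G0 1 = 0" using has_integral_unique by blast
  then show ?thesis by simp
qed

lemma G0_pos: "0 < G0 1"
proof (rule ccontr)
  assume "\<not> 0 < G0 1"
  then have z: "G0 u = 0" if "u \<le> 1" for u
    using G0_mono[of u 1] G0_mono[of 0 u] G0_zero[of 0] that by (cases "u \<le> 0") (auto simp: G0_zero)
  have "((\<lambda>_. 0) has_real_derivative 0) (at (1/2::real))" by simp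
  then have d0: "(G0 has_real_derivative 0) (at (1/2))"
  proof (rule has_field_derivative_transform_within_open[where S="{..<1}"])
    fix x :: real assume "x \<in> {..<1}" then show "0 = G0 x" using z[of x] by simp
  qed auto
  moreover have "Ek 0 (1/2) > 0" by (simp add: Ek_def)
  from DERIV_unique[OF G0_deriv[of "1/2"] d0] have "Ek 0 (1/2) = 0" .
  with \<open>Ek 0 (1/2) > 0\<close> show False by simp
qed

definition c0 :: real where "c0 = G0 1"
definition Phi :: "real \<Rightarrow> real" where "Phi v = G0 v / c0"

lemma c0_pos: "0 < c0" using G0_pos c0_def by simp

lemma Phi_deriv: "(Phi has_real_derivative Ek 0 v / c0) (at v)"
  unfolding Phi_def using DERIV_cdivide[OF G0_deriv, of c0] by simp

lemma Phi_0: "v \<le> 0 \<Longrightarrow> Phi v = 0" by (simp add: Phi_def G0_zero)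
lemma Phi_1: "1 \<le> v \<Longrightarrow> Phi v = 1"
proof -
  assume "1 \<le> v" then have "G0 v = c0" using G0_const c0_def by simp
  then show ?thesis using c0_pos by (simp add: Phi_def)
qed
lemma Phi_mono: "u \<le> v \<Longrightarrow> Phi u \<le> Phi v"
  using c0_pos G0_mono by (simp add: Phi_def divide_right_mono)
lemma Phi_range: "0 \<le> Phi v \<and> Phi v \<le> 1"
proof
  show "0 \<le> Phi v"
  proof (cases "v \<le> 0")
    case False then show ?thesis using Phi_mono[of 0 v] Phi_0[of 0] by simp
  qed (simp add: Phi_0)
  show "Phi v \<le> 1"
  proof (cases "1 \<le> v")
    case False then show ?thesis using Phi_mono[of v 1] Phi_1[of 1] by simp
  qed (simp add: Phi_1)
qed

definition FPhi :: "nat \<Rightarrow> real \<Rightarrow> real" where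
  "FPhi = (\<lambda>k. case k of 0 \<Rightarrow> Phi | Suc j \<Rightarrow> (\<lambda>t. (1/c0) * Ek j t))"

lemma dseq_FPhi: "dseq FPhi"
  unfolding FPhi_def
  by (rule dseq_anti[OF dseq_cmult[OF dseq_Ek]]) (use Phi_deriv in auto)

lemma Ek_isCont: "isCont (Ek k) x" using Ek_deriv DERIV_isCont by blast

definition rho :: "real \<Rightarrow> real \<Rightarrow> real \<Rightarrow> real" where
  "rho \<epsilon> x0 t = Ek 0 ((t - x0) / \<epsilon>) / (c0 * \<epsilon>)"

lemma rho_nonneg: "0 < \<epsilon> \<Longrightarrow> 0 \<le> rho \<epsilon> x0 t"
  using c0_pos by (simp add: rho_def Ek0_nonneg)

lemma rho_out: "0 < \<epsilon> \<Longrightarrow> t \<notin> {x0..x0+\<epsilon>} \<Longrightarrow> rho \<epsilon> x0 t = 0"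
proof -
  assume e: "0 < \<epsilon>" and t: "t \<notin> {x0..x0+\<epsilon>}"
  then have "(t - x0) / \<epsilon> \<le> 0 \<or> 1 \<le> (t - x0) / \<epsilon>"
    by (auto simp: divide_le_0_iff le_divide_eq)
  then show ?thesis by (simp add: rho_def Ek_out)
qed

lemma rho_cont: "0 < \<epsilon> \<Longrightarrow> continuous_on S (rho \<epsilon> x0)"
proof (rule continuous_at_imp_continuous_on, intro ballI)
  fix t assume "0 < \<epsilon>"
  have "isCont (\<lambda>t. Ek 0 ((t - x0) / \<epsilon>)) t"
    by (rule isCont_o2[OF _ Ek_isCont]) (use \<open>0 < \<epsilon>\<close> in \<open>auto intro!: continuous_intros\<close>)
  then show "isCont (rho \<epsilon> x0) t" unfolding rho_def using \<open>0 < \<epsilon>\<close> c0_pos by (intro continuous_intros) auto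
qed

lemma rho_int1:
  assumes e: "0 < \<epsilon>"
  shows "(rho \<epsilon> x0 has_integral 1) {x0..x0+\<epsilon>}"
proof -
  have d: "((\<lambda>t. Phi ((t - x0) / \<epsilon>)) has_real_derivative rho \<epsilon> x0 t) (at t)" for t
  proof -
    have g: "((\<lambda>t. (t - x0) / \<epsilon>) has_real_derivative 1 / \<epsilon>) (at t)"
      using e by (auto intro!: derivative_eq_intros)
    have "((\<lambda>t. Phi ((t - x0) / \<epsilon>)) has_real_derivative Ek 0 ((t - x0) / \<epsilon>) / c0 * (1 / \<epsilon>)) (at t)"
      by (rule DERIV_chain2[OF Phi_deriv g])
    then show ?thesis by (simp add: rho_def)
  qed
  have "(rho \<epsilon> x0 has_integral (Phi ((x0 + \<epsilon> - x0) / \<epsilon>) - Phi ((x0 - x0) / \<epsilon>))) {x0..x0+\<epsilon>}"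
    using e d
    by (intro fundamental_theorem_of_calculus)
       (auto simp: has_real_derivative_iff_has_vector_derivative intro: has_vector_derivative_at_within)
  then show ?thesis using e by (simp add: Phi_0 Phi_1)
qed

lemma moll:
  fixes f :: "real \<Rightarrow> real"
  assumes e: "0 < \<epsilon>" and cf: "continuous_on {x0..x0+\<epsilon>} f"
    and osc: "\<And>u. u \<in> {x0..x0+\<epsilon>} \<Longrightarrow> \<bar>f u - f x0\<bar> \<le> \<eta>"
  shows "\<exists>Y. ((\<lambda>t. f t * rho \<epsilon> x0 t) has_integral Y) UNIV \<and> \<bar>Y - f x0\<bar> \<le> \<eta>"
proof -
  let ?S = "{x0..x0+\<epsilon>}"
  have r1: "(rho \<epsilon> x0 has_integral 1) ?S" by (rule rho_int1[OF e])
  have ci: "continuous_on ?S (\<lambda>t. f t * rho \<epsilon> x0 t)"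
    by (intro continuous_intros cf rho_cont e)
  then have hi: "(\<lambda>t. f t * rho \<epsilon> x0 t) integrable_on ?S" by (rule integrable_continuous_interval)
  define Y where "Y = integral ?S (\<lambda>t. f t * rho \<epsilon> x0 t)"
  have hY: "((\<lambda>t. f t * rho \<epsilon> x0 t) has_integral Y) ?S" using hi Y_def by (simp add: has_integral_integral)
  have r1': "((\<lambda>t. f x0 * rho \<epsilon> x0 t) has_integral f x0 * 1) ?S"
    by (rule has_integral_mult_right[OF r1])
  have dY: "((\<lambda>t. f t * rho \<epsilon> x0 t - f x0 * rho \<epsilon> x0 t) has_integral Y - f x0) ?S"
    using has_integral_diff[OF hY r1'] by simp
  have rh: "((\<lambda>t. \<eta> * rho \<epsilon> x0 t) has_integral \<eta> * 1) ?S"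
    by (rule has_integral_mult_right[OF r1])
  have "norm (integral ?S (\<lambda>t. f t * rho \<epsilon> x0 t - f x0 * rho \<epsilon> x0 t)) \<le> integral ?S (\<lambda>t. \<eta> * rho \<epsilon> x0 t)"
  proof (rule integral_norm_bound_integral)
    show "(\<lambda>t. f t * rho \<epsilon> x0 t - f x0 * rho \<epsilon> x0 t) integrable_on ?S" using dY by blast
    show "(\<lambda>t. \<eta> * rho \<epsilon> x0 t) integrable_on ?S" using rh by blast
    fix t assume t: "t \<in> ?S"
    have "norm (f t * rho \<epsilon> x0 t - f x0 * rho \<epsilon> x0 t) = \<bar>f t - f x0\<bar> * rho \<epsilon> x0 t"
      using rho_nonneg[OF e] by (simp add: abs_mult left_diff_distrib[symmetric])
    also have "\<dots> \<le> \<eta> * rho \<epsilon> x0 t"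
      by (rule mult_right_mono[OF osc[OF t] rho_nonneg[OF e]])
    finally show "norm (f t * rho \<epsilon> x0 t - f x0 * rho \<epsilon> x0 t) \<le> \<eta> * rho \<epsilon> x0 t" .
  qed
  then have "\<bar>Y - f x0\<bar> \<le> \<eta>"
    using integral_unique[OF dY] integral_unique[OF rh] integral_unique[OF r1] by simp
  moreover have "((\<lambda>t. f t * rho \<epsilon> x0 t) has_integral Y) UNIV"
    by (rule has_integral_on_superset[OF hY]) (use rho_out[OF e] in auto)
  ultimately show ?thesis by blast
qed

definition FT :: "real \<Rightarrow> real \<Rightarrow> real \<Rightarrow> nat \<Rightarrow> real \<Rightarrow> real" where
  "FT a b \<epsilon> k t = (1/\<epsilon>)^k * FPhi k ((1/\<epsilon>)*t + (-a/\<epsilon>)) - (1/\<epsilon>)^k * FPhi k ((1/\<epsilon>)*t + (-b/\<epsilon>))"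

lemma dseq_FT: "dseq (FT a b \<epsilon>)"
  unfolding FT_def[abs_def]
  by (rule dseq_diff[OF dseq_affine[OF dseq_FPhi] dseq_affine[OF dseq_FPhi]])

lemma FT0: "0 < \<epsilon> \<Longrightarrow> FT a b \<epsilon> 0 t = Phi ((t - a)/\<epsilon>) - Phi ((t - b)/\<epsilon>)"
  by (simp add: FT_def FPhi_def diff_divide_distrib)

lemma FT1: "0 < \<epsilon> \<Longrightarrow> FT a b \<epsilon> 1 t = rho \<epsilon> a t - rho \<epsilon> b t"
  by (simp add: FT_def FPhi_def rho_def diff_divide_distrib mult.commute)

lemma FT0_out: "0 < \<epsilon> \<Longrightarrow> a \<le> b \<Longrightarrow> t \<notin> {a..b+\<epsilon>} \<Longrightarrow> FT a b \<epsilon> 0 t = 0"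
proof -
  assume e: "0 < \<epsilon>" and ab: "a \<le> b" and t: "t \<notin> {a..b+\<epsilon>}"
  show ?thesis
  proof (cases "t < a")
    case True
    then have "(t - a)/\<epsilon> \<le> 0" "(t - b)/\<epsilon> \<le> 0" using e ab by (auto simp: divide_le_0_iff)
    then show ?thesis using e by (simp add: FT0 Phi_0)
  next
    case False
    then have "t > b + \<epsilon>" using t by auto
    then have "1 \<le> (t - a)/\<epsilon>" "1 \<le> (t - b)/\<epsilon>" using e ab by (auto simp: le_divide_eq)
    then show ?thesis using e by (simp add: FT0 Phi_1)
  qed
qed

lemma FT0_abs: "0 < \<epsilon> \<Longrightarrow> \<bar>FT a b \<epsilon> 0 t\<bar> \<le> 1"
  using Phi_range[of "(t - a)/\<epsilon>"] Phi_range[of "(t - b)/\<epsilon>"] by (simp add: FT0 abs_le_iff)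

lemma FT_test:
  assumes e: "0 < \<epsilon>" and ab: "a \<le> b" and sub: "{a..b+\<epsilon>} \<subseteq> U"
  shows "test_fun U (FT a b \<epsilon> 0)"
proof -
  have s: "{x. FT a b \<epsilon> 0 x \<noteq> 0} \<subseteq> {a..b+\<epsilon>}" using FT0_out[OF e ab] by blast
  then have c: "closure {x. FT a b \<epsilon> 0 x \<noteq> 0} \<subseteq> {a..b+\<epsilon>}"
    by (rule closure_minimal) simp
  have "bounded {x. FT a b \<epsilon> 0 x \<noteq> 0}" by (rule bounded_subset[OF _ s]) simp
  then have "compact (closure {x. FT a b \<epsilon> 0 x \<noteq> 0})" by (simp add: compact_closure)
  then show ?thesis unfolding test_fun_def using dseq_smooth[OF dseq_FT] c sub by blast
qed

lemma core:
  fixes f g :: "real \<Rightarrow> real"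
  assumes wd: "weak_deriv f g I" and cf: "continuous_on I f" and ab: "a < b" and e: "0 < \<epsilon>"
    and sub: "{a..b+\<epsilon>} \<subseteq> interior I"
    and oa: "\<And>u. u \<in> {a..a+\<epsilon>} \<Longrightarrow> \<bar>f u - f a\<bar> \<le> \<eta>"
    and ob: "\<And>u. u \<in> {b..b+\<epsilon>} \<Longrightarrow> \<bar>f u - f b\<bar> \<le> \<eta>"
    and gi: "integrable lebesgue (\<lambda>x. indicator {a..b+\<epsilon>} x * \<bar>g x\<bar>)"
  shows "\<bar>f a - f b\<bar> \<le> (\<integral>x. indicator {a..b+\<epsilon>} x * \<bar>g x\<bar> \<partial>lebesgue) + 2*\<eta>"
proof -
  define \<phi> where "\<phi> = FT a b \<epsilon> 0"
  have tf: "test_fun (interior I) \<phi>" unfolding \<phi>_def by (rule FT_test) (use e ab sub in auto)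
  have dphi: "deriv \<phi> = FT a b \<epsilon> 1" unfolding \<phi>_def using dseq_deriv[OF dseq_FT, of 1] by simp
  have W: "integrable lebesgue (\<lambda>x. f x * deriv \<phi> x) \<and> integrable lebesgue (\<lambda>x. g x * \<phi> x) \<and>
      (\<integral>x. f x * deriv \<phi> x \<partial>lebesgue) = - (\<integral>x. g x * \<phi> x \<partial>lebesgue)"
    using wd tf unfolding weak_deriv_def by blast
  note W' = W[unfolded dphi]
  have i1: "integrable lebesgue (\<lambda>x. f x * FT a b \<epsilon> 1 x)" using W' by blast
  have i2: "integrable lebesgue (\<lambda>x. g x * \<phi> x)" using W' by blast
  have eq: "(\<integral>x. f x * FT a b \<epsilon> 1 x \<partial>lebesgue) = - (\<integral>x. g x * \<phi> x \<partial>lebesgue)" using W' by blast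
  have sI: "{a..b+\<epsilon>} \<subseteq> I" using sub interior_subset by blast
  have "{a..a+\<epsilon>} \<subseteq> I" "{b..b+\<epsilon>} \<subseteq> I" using sI ab by auto
  then have ca: "continuous_on {a..a+\<epsilon>} f" and cb: "continuous_on {b..b+\<epsilon>} f"
    using cf continuous_on_subset by blast+
  obtain Ya where Ya: "((\<lambda>t. f t * rho \<epsilon> a t) has_integral Ya) UNIV" "\<bar>Ya - f a\<bar> \<le> \<eta>"
    using moll[OF e ca oa] by blast
  obtain Yb where Yb: "((\<lambda>t. f t * rho \<epsilon> b t) has_integral Yb) UNIV" "\<bar>Yb - f b\<bar> \<le> \<eta>"
    using moll[OF e cb ob] by blast
  have "((\<lambda>t. f t * rho \<epsilon> a t - f t * rho \<epsilon> b t) has_integral Ya - Yb) UNIV"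
    by (rule has_integral_diff[OF Ya(1) Yb(1)])
  moreover have "(\<lambda>t. f t * rho \<epsilon> a t - f t * rho \<epsilon> b t) = (\<lambda>x. f x * FT a b \<epsilon> 1 x)"
    by (intro ext) (simp only: FT1[OF e] right_diff_distrib)
  ultimately have h1: "((\<lambda>x. f x * FT a b \<epsilon> 1 x) has_integral Ya - Yb) UNIV" by simp
  have X: "(\<integral>x. f x * FT a b \<epsilon> 1 x \<partial>lebesgue) = Ya - Yb"
    using has_integral_unique[OF has_integral_integral_lebesgue[OF i1] h1] .
  have "norm (\<integral>x. g x * \<phi> x \<partial>lebesgue) \<le> (\<integral>x. indicator {a..b+\<epsilon>} x * \<bar>g x\<bar> \<partial>lebesgue)"
  proof (rule Bochner_Integration.integral_norm_bound_integral[OF i2 gi])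
    fix x :: real
    show "norm (g x * \<phi> x) \<le> indicator {a..b+\<epsilon>} x * \<bar>g x\<bar>"
    proof (cases "x \<in> {a..b+\<epsilon>}")
      case True
      have "\<bar>g x\<bar> * \<bar>\<phi> x\<bar> \<le> \<bar>g x\<bar> * 1"
        by (rule mult_left_mono) (use FT0_abs[OF e] \<phi>_def in auto)
      then show ?thesis using True by (simp add: abs_mult)
    next
      case False
      then have "\<phi> x = 0" unfolding \<phi>_def using FT0_out[OF e] ab by auto
      then show ?thesis by simp
    qed
  qed
  then have "\<bar>Ya - Yb\<bar> \<le> (\<integral>x. indicator {a..b+\<epsilon>} x * \<bar>g x\<bar> \<partial>lebesgue)"
    using X eq by simp
  then show ?thesis using Ya(2) Yb(2) by linarith
qed

lemma interval_open_sub_interior: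
  fixes I :: "real set"
  assumes "is_interval I" "a \<in> I" "b \<in> I"
  shows "{a<..<b} \<subseteq> interior I"
proof (rule interior_maximal)
  show "{a<..<b} \<subseteq> I"
  proof
    fix x assume "x \<in> {a<..<b}"
    then show "x \<in> I" using mem_is_interval_1_I[OF assms, of x] by simp
  qed
qed simp

lemma cont_at_within:
  fixes f :: "real \<Rightarrow> real"
  assumes "continuous_on I f" "x \<in> I" "0 < \<delta>"
  shows "\<exists>d>0. \<forall>y\<in>I. \<bar>y - x\<bar> < d \<longrightarrow> \<bar>f y - f x\<bar> < \<delta>"
proof -
  have "\<forall>x\<in>I. \<forall>e>0. \<exists>d>0. \<forall>x'\<in>I. dist x' x < d \<longrightarrow> dist (f x') (f x) < e"
    using assms(1) unfolding continuous_on_iff .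
  then obtain d where "d > 0" "\<forall>x'\<in>I. dist x' x < d \<longrightarrow> dist (f x') (f x) < \<delta>"
    using assms(2,3) by blast
  then show ?thesis unfolding dist_real_def by blast
qed

lemma ftc_ineq:
  fixes f g :: "real \<Rightarrow> real"
  assumes wd: "weak_deriv f g I" and cf: "continuous_on I f" and iv: "is_interval I"
    and aI: "a \<in> I" and bI: "b \<in> I" and ab: "a < b"
    and gi: "integrable lebesgue (\<lambda>x. indicator {a..b} x * \<bar>g x\<bar>)"
  shows "\<bar>f b - f a\<bar> \<le> (\<integral>x. indicator {a..b} x * \<bar>g x\<bar> \<partial>lebesgue)"
proof (rule field_le_epsilon)
  fix e :: real assume "0 < e"
  define \<delta> where "\<delta> = e / 4"
  have d0: "0 < \<delta>" using \<open>0 < e\<close> by (simp add: \<delta>_def)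
  obtain d1 where d1: "d1 > 0" "\<And>y. y \<in> I \<Longrightarrow> \<bar>y - a\<bar> < d1 \<Longrightarrow> \<bar>f y - f a\<bar> < \<delta>"
    using cont_at_within[OF cf aI d0] by blast
  obtain d2 where d2: "d2 > 0" "\<And>y. y \<in> I \<Longrightarrow> \<bar>y - b\<bar> < d2 \<Longrightarrow> \<bar>f y - f b\<bar> < \<delta>"
    using cont_at_within[OF cf bI d0] by blast
  define m where "m = min (min d1 d2) (b - a) / 3"
  have m0: "0 < m" using d1 d2 ab by (simp add: m_def)
  have md: "m < d1" "m < d2" "3 * m \<le> b - a" using d1 d2 ab by (auto simp: m_def)
  define a' where "a' = a + m"
  define b' where "b' = b - m"
  have ab': "a < a'" "a' < b'" "b' < b" using m0 md unfolding a'_def b'_def by linarith+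
  have sub: "{a<..<b} \<subseteq> interior I" by (rule interval_open_sub_interior[OF iv aI bI])
  have subI: "{a..b} \<subseteq> I"
  proof
    fix x assume "x \<in> {a..b}"
    then show "x \<in> I" using mem_is_interval_1_I[OF iv aI bI, of x] by simp
  qed
  have a'I: "a' \<in> I" "b' \<in> I" using ab' subI by (simp_all add: subset_iff)
  have fa: "\<bar>f a' - f a\<bar> \<le> \<delta>" using d1(2)[OF a'I(1)] m0 md by (simp add: a'_def)
  have fb: "\<bar>f b' - f b\<bar> \<le> \<delta>" using d2(2)[OF a'I(2)] m0 md by (simp add: b'_def)
  obtain d3 where d3: "d3 > 0" "\<And>y. y \<in> I \<Longrightarrow> \<bar>y - a'\<bar> < d3 \<Longrightarrow> \<bar>f y - f a'\<bar> < \<delta>"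
    using cont_at_within[OF cf a'I(1) d0] by blast
  obtain d4 where d4: "d4 > 0" "\<And>y. y \<in> I \<Longrightarrow> \<bar>y - b'\<bar> < d4 \<Longrightarrow> \<bar>f y - f b'\<bar> < \<delta>"
    using cont_at_within[OF cf a'I(2) d0] by blast
  define \<epsilon> where "\<epsilon> = min (min d3 d4) m / 2"
  have e0: "0 < \<epsilon>" using d3 d4 m0 by (simp add: \<epsilon>_def)
  have ed: "\<epsilon> < d3" "\<epsilon> < d4" "\<epsilon> < m" using d3 d4 m0 by (auto simp: \<epsilon>_def)
  have sub2: "{a'..b'+\<epsilon>} \<subseteq> {a<..<b}" using ab' ed by (auto simp: b'_def)
  then have sub3: "{a'..b'+\<epsilon>} \<subseteq> interior I" using sub by blast
  have sub4: "{a'..b'+\<epsilon>} \<subseteq> {a..b}" using sub2 by auto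
  have oa: "\<bar>f u - f a'\<bar> \<le> \<delta>" if "u \<in> {a'..a'+\<epsilon>}" for u
  proof -
    have "u \<in> {a'..b'+\<epsilon>}" using that ab' by auto
    then have "u \<in> I" using sub4 subI by blast
    moreover have "\<bar>u - a'\<bar> < d3" using that ed by auto
    ultimately show ?thesis using d3(2)[of u] by simp
  qed
  have ob: "\<bar>f u - f b'\<bar> \<le> \<delta>" if "u \<in> {b'..b'+\<epsilon>}" for u
  proof -
    have "u \<in> {a'..b'+\<epsilon>}" using that ab' by auto
    then have "u \<in> I" using sub4 subI by blast
    moreover have "\<bar>u - b'\<bar> < d4" using that ed by auto
    ultimately show ?thesis using d4(2)[of u] by simp
  qed
  have eqf: "(\<lambda>x. indicator {a'..b'+\<epsilon>} x * \<bar>g x\<bar>) = (\<lambda>x. indicator {a'..b'+\<epsilon>} x *\<^sub>R (indicator {a..b} x * \<bar>g x\<bar>))"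
    using sub4 by (auto simp: indicator_def fun_eq_iff)
  have gi': "integrable lebesgue (\<lambda>x. indicator {a'..b'+\<epsilon>} x * \<bar>g x\<bar>)"
    unfolding eqf by (rule integrable_mult_indicator[OF _ gi]) simp
  have c: "\<bar>f a' - f b'\<bar> \<le> (\<integral>x. indicator {a'..b'+\<epsilon>} x * \<bar>g x\<bar> \<partial>lebesgue) + 2*\<delta>"
    by (rule core[OF wd cf ab'(2) e0 sub3 oa ob gi'])
  have "(\<integral>x. indicator {a'..b'+\<epsilon>} x * \<bar>g x\<bar> \<partial>lebesgue) \<le> (\<integral>x. indicator {a..b} x * \<bar>g x\<bar> \<partial>lebesgue)"
    by (rule integral_mono[OF gi' gi]) (use sub4 in \<open>auto simp: indicator_def\<close>)
  with c fa fb show "\<bar>f b - f a\<bar> \<le> (\<integral>x. indicator {a..b} x * \<bar>g x\<bar> \<partial>lebesgue) + e"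
    unfolding \<delta>_def by linarith
qed

lemma interval_lebesgue: "is_interval (I::real set) \<Longrightarrow> I \<in> sets lebesgue"
  using real_interval_borel_measurable[of I] by simp

lemma meas_ind:
  fixes g :: "real \<Rightarrow> real"
  assumes gm: "g \<in> borel_measurable (lebesgue_on I)" and IL: "I \<in> sets lebesgue"
    and SI: "S \<subseteq> I" and SL: "S \<in> sets lebesgue"
  shows "(\<lambda>x. indicator S x * \<bar>g x\<bar>) \<in> borel_measurable lebesgue"
proof -
  have "(\<lambda>x. indicator I x *\<^sub>R g x) \<in> borel_measurable lebesgue"
    using gm IL by (subst (asm) borel_measurable_restrict_space_iff) auto
  then have m: "(\<lambda>x. indicator S x * \<bar>indicator I x *\<^sub>R g x\<bar>) \<in> borel_measurable lebesgue"
    using SL by measurable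
  have "(\<lambda>x. indicator S x * \<bar>indicator I x *\<^sub>R g x\<bar>) = (\<lambda>x. indicator S x * \<bar>g x\<bar>)"
    using SI by (auto simp: indicator_def fun_eq_iff)
  with m show ?thesis by simp
qed

lemma young_pt:
  fixes x lam P :: real
  assumes l: "0 < lam" and x: "0 \<le> x" and P: "1 \<le> P"
  shows "x \<le> lam + lam powr (1 - P) * x powr P"
proof (cases "x \<le> lam")
  case True
  have "0 \<le> lam powr (1 - P) * x powr P" by simp
  with True show ?thesis by linarith
next
  case False
  then have xl: "lam < x" by simp
  then have x0: "0 < x" using l by simp
  have "x powr (1 + (P - 1)) = x powr 1 * x powr (P - 1)" by (rule powr_add)
  then have xp: "x powr P = x * x powr (P - 1)" using x0 by simp
  have m: "lam powr (P - 1) \<le> x powr (P - 1)" by (rule powr_mono2) (use P l xl in auto)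
  have one: "lam powr (1 - P) * lam powr (P - 1) = 1" using l by (simp add: powr_add[symmetric])
  have "x = x * (lam powr (1 - P) * lam powr (P - 1))" using one by simp
  also have "\<dots> \<le> x * (lam powr (1 - P) * x powr (P - 1))"
    by (intro mult_left_mono m) (use x in auto)
  also have "\<dots> = lam powr (1 - P) * x powr P" using xp by (simp add: algebra_simps)
  finally show ?thesis using l by linarith
qed

lemma Lp_bound:
  fixes g :: "real \<Rightarrow> real"
  assumes iv: "is_interval I" and p1: "1 \<le> p" and gL: "in_Lp p I g"
  shows "\<exists>K\<ge>0. \<forall>S L. S \<subseteq> I \<longrightarrow> S \<in> sets lebesgue \<longrightarrow> bounded S \<longrightarrow> measure lebesgue S \<le> L \<longrightarrow> 0 < L \<longrightarrow>
     integrable lebesgue (\<lambda>x. indicator S x * \<bar>g x\<bar>) \<and>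
     (\<integral>x. indicator S x * \<bar>g x\<bar> \<partial>lebesgue) \<le> K * L powr (1 - (if p = \<infinity> then 0 else 1 / real_of_ereal p))"
proof -
  have IL: "I \<in> sets lebesgue" by (rule interval_lebesgue[OF iv])
  have gm: "g \<in> borel_measurable (lebesgue_on I)" using gL unfolding in_Lp_def by blast
  have Sfin: "emeasure lebesgue S < \<infinity>" if "S \<in> sets lebesgue" "bounded S" for S
    unfolding infinity_ennreal_def less_top[symmetric] by (rule fmeasurableD2[OF bounded_set_imp_lmeasurable[OF that(2,1)]])
  show ?thesis
  proof (cases "p = \<infinity>")
    case True
    then obtain C where C: "AE x in lebesgue_on I. \<bar>g x\<bar> \<le> C" using gL by (auto simp: in_Lp_def)
    have C': "AE x in lebesgue. x \<in> I \<longrightarrow> \<bar>g x\<bar> \<le> C"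
      using C IL by (subst (asm) AE_restrict_space_iff) auto
    define K where "K = max 0 C"
    have "\<forall>S L. S \<subseteq> I \<longrightarrow> S \<in> sets lebesgue \<longrightarrow> bounded S \<longrightarrow> measure lebesgue S \<le> L \<longrightarrow> 0 < L \<longrightarrow>
      integrable lebesgue (\<lambda>x. indicator S x * \<bar>g x\<bar>) \<and>
      (\<integral>x. indicator S x * \<bar>g x\<bar> \<partial>lebesgue) \<le> K * L powr (1 - (if p = \<infinity> then 0 else 1 / real_of_ereal p))"
    proof (intro allI impI)
      fix S L assume SI: "S \<subseteq> I" and SL: "S \<in> sets lebesgue" and Sb: "bounded S"
        and mL: "measure lebesgue S \<le> L" and L0: "0 < L"
      have ii: "integrable lebesgue (indicator S :: real \<Rightarrow> real)"
        by (rule integrable_real_indicator[OF SL Sfin[OF SL Sb]])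
      then have ik: "integrable lebesgue (\<lambda>x. K * indicator S x)" by simp
      have pt: "AE x in lebesgue. indicator S x * \<bar>g x\<bar> \<le> K * indicator S x"
        using C' by eventually_elim (use SI in \<open>auto simp: indicator_def K_def\<close>)
      have int: "integrable lebesgue (\<lambda>x. indicator S x * \<bar>g x\<bar>)"
      proof (rule Bochner_Integration.integrable_bound[OF ik meas_ind[OF gm IL SI SL]])
        show "AE x in lebesgue. norm (indicator S x * \<bar>g x\<bar>) \<le> norm (K * indicator S x)"
          using pt by eventually_elim (auto simp: K_def indicator_def)
      qed
      have "(\<integral>x. indicator S x * \<bar>g x\<bar> \<partial>lebesgue) \<le> (\<integral>x. K * indicator S x \<partial>lebesgue)"
        by (rule integral_mono_AE[OF int ik pt])
      also have "\<dots> = K * measure lebesgue S"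
        using SL Sfin[OF SL Sb] by simp
      also have "\<dots> \<le> K * L" by (rule mult_left_mono[OF mL]) (simp add: K_def)
      finally show "integrable lebesgue (\<lambda>x. indicator S x * \<bar>g x\<bar>) \<and>
        (\<integral>x. indicator S x * \<bar>g x\<bar> \<partial>lebesgue) \<le> K * L powr (1 - (if p = \<infinity> then 0 else 1 / real_of_ereal p))"
        using int True L0 by simp
    qed
    moreover have "K \<ge> 0" by (simp add: K_def)
    ultimately show ?thesis by blast
  next
    case False
    then obtain P where pP: "p = ereal P" using p1 by (cases p) auto
    have P1: "1 \<le> P" using p1 pP by simp
    have gi: "integrable (lebesgue_on I) (\<lambda>x. \<bar>g x\<bar> powr P)" using gL False pP by (simp add: in_Lp_def)
    define h where "h x = indicator I x * \<bar>g x\<bar> powr P" for x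
    have hi: "integrable lebesgue h"
      using gi IL unfolding h_def by (subst (asm) integrable_restrict_space) auto
    define M where "M = (\<integral>x. h x \<partial>lebesgue)"
    have M0: "0 \<le> M" unfolding M_def h_def by (rule integral_nonneg_AE) auto
    define K where "K = 1 + M"
    have "\<forall>S L. S \<subseteq> I \<longrightarrow> S \<in> sets lebesgue \<longrightarrow> bounded S \<longrightarrow> measure lebesgue S \<le> L \<longrightarrow> 0 < L \<longrightarrow>
      integrable lebesgue (\<lambda>x. indicator S x * \<bar>g x\<bar>) \<and>
      (\<integral>x. indicator S x * \<bar>g x\<bar> \<partial>lebesgue) \<le> K * L powr (1 - (if p = \<infinity> then 0 else 1 / real_of_ereal p))"
    proof (intro allI impI)
      fix S L assume SI: "S \<subseteq> I" and SL: "S \<in> sets lebesgue" and Sb: "bounded S"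
        and mL: "measure lebesgue S \<le> L" and L0: "0 < L"
      define lam where "lam = L powr (- (1/P))"
      have l0: "0 < lam" using L0 by (simp add: lam_def)
      have ii: "integrable lebesgue (indicator S :: real \<Rightarrow> real)"
        by (rule integrable_real_indicator[OF SL Sfin[OF SL Sb]])
      have ik: "integrable lebesgue (\<lambda>x. lam * indicator S x + lam powr (1 - P) * h x)"
        using ii hi by simp
      have pt: "indicator S x * \<bar>g x\<bar> \<le> lam * indicator S x + lam powr (1 - P) * h x" for x
      proof (cases "x \<in> S")
        case True
        then have "x \<in> I" using SI by blast
        then show ?thesis using True young_pt[OF l0 abs_ge_zero P1, of "g x"] by (simp add: h_def)
      next
        case False
        have "0 \<le> h x" by (simp add: h_def)
        then show ?thesis using False l0 by simp
      qed
      have int: "integrable lebesgue (\<lambda>x. indicator S x * \<bar>g x\<bar>)"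
      proof (rule Bochner_Integration.integrable_bound[OF ik meas_ind[OF gm IL SI SL]])
        show "AE x in lebesgue. norm (indicator S x * \<bar>g x\<bar>) \<le> norm (lam * indicator S x + lam powr (1 - P) * h x)"
        proof (rule AE_I2)
          fix x
          have "0 \<le> indicator S x * \<bar>g x\<bar>" by simp
          then show "norm (indicator S x * \<bar>g x\<bar>) \<le> norm (lam * indicator S x + lam powr (1 - P) * h x)"
            using pt[of x] by simp
        qed
      qed
      have "(\<integral>x. indicator S x * \<bar>g x\<bar> \<partial>lebesgue) \<le> (\<integral>x. lam * indicator S x + lam powr (1 - P) * h x \<partial>lebesgue)"
        by (rule integral_mono[OF int ik pt])
      also have "\<dots> = lam * measure lebesgue S + lam powr (1 - P) * M"
        using ii hi SL Sfin[OF SL Sb] by (simp add: M_def)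
      also have "\<dots> \<le> lam * L + lam powr (1 - P) * M"
        using mL l0 by simp
      also have "lam * L = L powr (1 - 1/P)"
      proof -
        have "L powr (- (1/P) + 1) = L powr (- (1/P)) * L powr 1" by (rule powr_add)
        then show ?thesis using L0 by (simp add: lam_def)
      qed
      also have "lam powr (1 - P) = L powr (1 - 1/P)"
      proof -
        have "- (1/P) * (1 - P) = 1 - 1/P" using P1 by (simp add: field_simps)
        then show ?thesis using L0 by (simp add: lam_def powr_powr)
      qed
      finally have "(\<integral>x. indicator S x * \<bar>g x\<bar> \<partial>lebesgue) \<le> K * L powr (1 - 1/P)"
        by (simp add: K_def algebra_simps)
      then show "integrable lebesgue (\<lambda>x. indicator S x * \<bar>g x\<bar>) \<and>
        (\<integral>x. indicator S x * \<bar>g x\<bar> \<partial>lebesgue) \<le> K * L powr (1 - (if p = \<infinity> then 0 else 1 / real_of_ereal p))"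
        using int False pP by simp
    qed
    moreover have "K \<ge> 0" using M0 by (simp add: K_def)
    ultimately show ?thesis by blast
  qed
qed

lemma osc_piece:
  fixes f g :: "real \<Rightarrow> real"
  assumes wd: "weak_deriv f g I" and cf: "continuous_on I f" and iv: "is_interval I"
    and gint: "\<And>a b. {a..b} \<subseteq> I \<Longrightarrow> integrable lebesgue (\<lambda>x. indicator {a..b} x * \<bar>g x\<bar>)"
    and gT: "integrable lebesgue (\<lambda>x. indicator T x * \<bar>g x\<bar>)"
    and Tc: "\<And>u v w. u \<in> T \<Longrightarrow> w \<in> T \<Longrightarrow> u \<le> v \<Longrightarrow> v \<le> w \<Longrightarrow> v \<in> T"
    and TI: "T \<subseteq> I"
    and s: "s \<in> T" and t: "t \<in> T"
  shows "\<bar>f t - f s\<bar> \<le> (\<integral>x. indicator T x * \<bar>g x\<bar> \<partial>lebesgue)"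
proof -
  have key: "\<bar>f v - f u\<bar> \<le> (\<integral>x. indicator T x * \<bar>g x\<bar> \<partial>lebesgue)"
    if u: "u \<in> T" and v: "v \<in> T" and uv: "u < v" for u v
  proof -
    have sub: "{u..v} \<subseteq> T" using Tc[OF u v] by auto
    then have subI: "{u..v} \<subseteq> I" using TI by blast
    have "\<bar>f v - f u\<bar> \<le> (\<integral>x. indicator {u..v} x * \<bar>g x\<bar> \<partial>lebesgue)"
      by (rule ftc_ineq[OF wd cf iv _ _ uv gint[OF subI]]) (use u v TI in auto)
    also have "\<dots> \<le> (\<integral>x. indicator T x * \<bar>g x\<bar> \<partial>lebesgue)"
      by (rule integral_mono[OF gint[OF subI] gT]) (use sub in \<open>auto simp: indicator_def\<close>)
    finally show ?thesis .
  qed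
  have nn: "0 \<le> (\<integral>x. indicator T x * \<bar>g x\<bar> \<partial>lebesgue)" by (rule integral_nonneg_AE) auto
  consider "s < t" | "s = t" | "t < s" by linarith
  then show ?thesis
  proof cases
    case 1 then show ?thesis using key[OF s t] by simp
  next
    case 2 then show ?thesis using nn by simp
  next
    case 3 then show ?thesis using key[OF t s] by (simp add: abs_minus_commute)
  qed
qed

lemma box_diam:
  fixes h :: real
  assumes "0 \<le> h"
  shows "bounded ({a..a+h} \<times> {c..c+h}) \<and> diameter ({a..a+h} \<times> {c..c+h}) \<le> 2*h"
proof
  show "bounded ({a..a+h} \<times> {c..c+h})" by (intro bounded_Times) auto
  show "diameter ({a..a+h} \<times> {c..c+h}) \<le> 2*h"
  proof (rule diameter_le)
    show "{a..a+h} \<times> {c..c+h} \<noteq> {} \<or> 0 \<le> 2*h" using assms by simp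
    fix x y assume x: "x \<in> {a..a+h} \<times> {c..c+h}" and y: "y \<in> {a..a+h} \<times> {c..c+h}"
    obtain x1 x2 y1 y2 where xy: "x = (x1, x2)" "y = (y1, y2)" by (cases x, cases y) auto
    have d1: "\<bar>x1 - y1\<bar> \<le> h" and d2: "\<bar>x2 - y2\<bar> \<le> h" using x y xy by auto
    have "norm (x - y) = sqrt ((x1 - y1)^2 + (x2 - y2)^2)" using xy by (simp add: norm_Pair)
    also have "\<dots> \<le> sqrt ((\<bar>x1 - y1\<bar> + \<bar>x2 - y2\<bar>)^2)"
      by (rule real_sqrt_le_mono) (simp add: power2_eq_square algebra_simps)
    also have "\<dots> = \<bar>x1 - y1\<bar> + \<bar>x2 - y2\<bar>" by simp
    also have "\<dots> \<le> 2*h" using d1 d2 by simp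
    finally show "norm (x - y) \<le> 2*h" .
  qed
qed

lemma cover_num_le:
  assumes "finite C" "\<forall>U\<in>C. bounded U \<and> diameter U \<le> r" "F \<subseteq> \<Union>C"
  shows "cover_num F r \<le> card C"
  unfolding cover_num_def by (rule Least_le) (use assms in blast)

lemma cover_main:
  fixes f g :: "real \<Rightarrow> real"
  assumes wd: "weak_deriv f g I" and cf: "continuous_on I f" and iv: "is_interval I"
    and t0I: "t0 \<in> I" and r0: "0 < r" and rR: "r \<le> R"
    and gint: "\<And>a b. {a..b} \<subseteq> I \<Longrightarrow> integrable lebesgue (\<lambda>x. indicator {a..b} x * \<bar>g x\<bar>)"
    and gJ: "\<And>a b. integrable lebesgue (\<lambda>x. indicator ({a..<b} \<inter> I) x * \<bar>g x\<bar>)"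
    and gS: "integrable lebesgue (\<lambda>x. indicator ({t0-2*R..t0+2*R} \<inter> I) x * \<bar>g x\<bar>)"
  shows "real (cover_num (cball (t0, f t0) R \<inter> graph I f) r)
    \<le> 4*R/r + 1 + (4/r) * (\<integral>x. indicator ({t0-2*R..t0+2*R} \<inter> I) x * \<bar>g x\<bar> \<partial>lebesgue)"
proof -
  define h where "h = r/2"
  have h0: "0 < h" using r0 by (simp add: h_def)
  define \<alpha> where "\<alpha> = t0 - R"
  define n where "n = nat \<lfloor>2*R/h\<rfloor> + 1"
  define T where "T i = {\<alpha> + real i * h ..< \<alpha> + real i * h + h} \<inter> I" for i :: nat
  define D where "D i = (\<integral>x. indicator (T i) x * \<bar>g x\<bar> \<partial>lebesgue)" for i
  define s where "s i = (SOME s. s \<in> T i)" for i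
  define m where "m i = nat \<lfloor>2 * D i / h\<rfloor> + 1" for i
  define \<beta> where "\<beta> i = f (s i) - D i" for i
  define Box where "Box i j = {\<alpha> + real i * h .. \<alpha> + real i * h + h} \<times> {\<beta> i + real j * h .. \<beta> i + real j * h + h}" for i j :: nat
  define C where "C = (\<lambda>(i,j). Box i j) ` (SIGMA i:{..<n}. {..<m i})"
  define S where "S = {t0-2*R..t0+2*R} \<inter> I"
  define A where "A = (\<integral>x. indicator S x * \<bar>g x\<bar> \<partial>lebesgue)"
  have gT: "integrable lebesgue (\<lambda>x. indicator (T i) x * \<bar>g x\<bar>)" for i
    unfolding T_def by (rule gJ)
  have D0: "0 \<le> D i" for i unfolding D_def by (rule integral_nonneg_AE) auto
  have fC: "finite C" unfolding C_def by auto
  have bC: "\<forall>U\<in>C. bounded U \<and> diameter U \<le> r"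
    using box_diam[of h] h0 unfolding C_def Box_def h_def by auto
  have cov: "cball (t0, f t0) R \<inter> graph I f \<subseteq> \<Union>C"
  proof
    fix p assume p: "p \<in> cball (t0, f t0) R \<inter> graph I f"
    then obtain t where t: "t \<in> I" "p = (t, f t)" by (auto simp: graph_def)
    have "dist t0 t \<le> dist (t0, f t0) (t, f t)" using dist_fst_le[of "(t0, f t0)" "(t, f t)"] by simp
    also have "\<dots> \<le> R" using p t by simp
    finally have tR: "\<bar>t - t0\<bar> \<le> R" by (simp add: dist_real_def abs_minus_commute)
    define y where "y = (t - \<alpha>) / h"
    have y0: "0 \<le> y" using tR h0 by (simp add: y_def \<alpha>_def)
    define i where "i = nat \<lfloor>y\<rfloor>"
    have ri: "real i = of_int \<lfloor>y\<rfloor>" using y0 by (simp add: i_def)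
    have fl: "real i \<le> y" "y < real i + 1" using ri by linarith+
    have ti: "\<alpha> + real i * h \<le> t" "t < \<alpha> + real i * h + h"
      using fl h0 by (simp_all add: y_def field_simps)
    have "y \<le> 2*R/h" using tR h0 by (simp add: y_def \<alpha>_def divide_right_mono)
    then have "\<lfloor>y\<rfloor> \<le> \<lfloor>2*R/h\<rfloor>" by (rule floor_mono)
    then have iN: "i < n" unfolding i_def n_def by linarith
    have tT: "t \<in> T i" using ti t by (simp add: T_def)
    then have sT: "s i \<in> T i" unfolding s_def by (rule someI)
    have Tc: "v \<in> T i" if "u \<in> T i" "w \<in> T i" "u \<le> v" "v \<le> w" for u v w
      using that mem_is_interval_1_I[OF iv, of u w v] by (auto simp: T_def)
    have osc: "\<bar>f t - f (s i)\<bar> \<le> D i"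
      unfolding D_def by (rule osc_piece[OF wd cf iv gint gT Tc _ sT tT]) (auto simp: T_def)
    define z where "z = (f t - \<beta> i) / h"
    have z0: "0 \<le> z" using osc h0 by (simp add: z_def \<beta>_def)
    have z2: "z \<le> 2 * D i / h" using osc h0 by (simp add: z_def \<beta>_def divide_right_mono)
    define j where "j = nat \<lfloor>z\<rfloor>"
    have rj: "real j = of_int \<lfloor>z\<rfloor>" using z0 by (simp add: j_def)
    have flj: "real j \<le> z" "z < real j + 1" using rj by linarith+
    have fj: "\<beta> i + real j * h \<le> f t" "f t \<le> \<beta> i + real j * h + h"
      using flj h0 by (simp_all add: z_def field_simps)
    have "\<lfloor>z\<rfloor> \<le> \<lfloor>2 * D i / h\<rfloor>" using z2 by (rule floor_mono)
    then have jm: "j < m i" unfolding j_def m_def by linarith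
    have "p \<in> Box i j" using t ti fj by (simp add: Box_def)
    moreover have "Box i j \<in> C" unfolding C_def using iN jm by force
    ultimately show "p \<in> \<Union>C" by blast
  qed
  have "cover_num (cball (t0, f t0) R \<inter> graph I f) r \<le> card C"
    by (rule cover_num_le[OF fC bC cov])
  also have "card C \<le> card (SIGMA i:{..<n}. {..<m i})" unfolding C_def by (rule card_image_le) auto
  also have "\<dots> = (\<Sum>i<n. m i)" by simp
  finally have c1: "real (cover_num (cball (t0, f t0) R \<inter> graph I f) r) \<le> (\<Sum>i<n. real (m i))"
    by (simp flip: of_nat_sum)
  have mi: "real (m i) \<le> 2 * D i / h + 1" for i
  proof -
    have "0 \<le> 2 * D i / h" using D0 h0 by simp
    then have "real (nat \<lfloor>2 * D i / h\<rfloor>) = of_int \<lfloor>2 * D i / h\<rfloor>" by simp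
    then show ?thesis unfolding m_def by linarith
  qed
  have "(\<Sum>i<n. real (m i)) \<le> (\<Sum>i<n. 2 * D i / h + 1)" by (rule sum_mono) (rule mi)
  also have "\<dots> = (2 / h) * (\<Sum>i<n. D i) + real n"
    by (simp add: sum.distrib sum_divide_distrib[symmetric] sum_distrib_left)
  finally have c2: "(\<Sum>i<n. real (m i)) \<le> (2 / h) * (\<Sum>i<n. D i) + real n" .
  have sumD: "(\<Sum>i<n. D i) \<le> A"
  proof -
    have "(\<Sum>i<n. D i) = (\<integral>x. (\<Sum>i<n. indicator (T i) x * \<bar>g x\<bar>) \<partial>lebesgue)"
      unfolding D_def by (rule Bochner_Integration.integral_sum[symmetric]) (rule gT)
    also have "\<dots> \<le> A"
      unfolding A_def
    proof (rule integral_mono)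
      show "integrable lebesgue (\<lambda>x. \<Sum>i<n. indicator (T i) x * \<bar>g x\<bar>)" by (rule Bochner_Integration.integrable_sum) (rule gT)
      show "integrable lebesgue (\<lambda>x. indicator S x * \<bar>g x\<bar>)" using gS by (simp add: S_def)
      fix x :: real
      define i0 where "i0 = nat \<lfloor>(x - \<alpha>) / h\<rfloor>"
      have ind: "(indicator (T i) x :: real) \<le> (if i = i0 then indicator S x else 0)" if "i < n" for i
      proof (cases "x \<in> T i")
        case True
        then have xi: "\<alpha> + real i * h \<le> x" "x < \<alpha> + real i * h + h" "x \<in> I" by (auto simp: T_def)
        then have "real i \<le> (x - \<alpha>) / h" "(x - \<alpha>) / h < real i + 1" using h0 by (simp_all add: field_simps)
        then have "\<lfloor>(x - \<alpha>) / h\<rfloor> = int i" by linarith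
        then have ii: "i = i0" by (simp add: i0_def)
        have "real i \<le> real n - 1" using that by linarith
        also have "real n - 1 \<le> 2*R/h" unfolding n_def
          using h0 rR r0 by (simp add: of_nat_nat)
        finally have "real i * h \<le> 2*R" using h0 by (simp add: field_simps)
        moreover have "h \<le> R" using rR r0 by (simp add: h_def)
        moreover have "0 \<le> real i * h" using h0 by simp
        ultimately have "t0 - 2*R \<le> x" "x \<le> t0 + 2*R" using xi r0 rR unfolding \<alpha>_def by linarith+
        then have "x \<in> S" using xi by (simp add: S_def)
        then show ?thesis using True ii by simp
      qed simp
      have "(\<Sum>i<n. indicator (T i) x * \<bar>g x\<bar>) = (\<Sum>i<n. indicator (T i) x) * \<bar>g x\<bar>"
        by (simp add: sum_distrib_right)
      also have "\<dots> \<le> (\<Sum>i<n. (if i = i0 then indicator S x else 0)) * \<bar>g x\<bar>"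
        by (intro mult_right_mono sum_mono ind) auto
      also have "\<dots> \<le> indicator S x * \<bar>g x\<bar>"
        by (intro mult_right_mono) auto
      finally show "(\<Sum>i<n. indicator (T i) x * \<bar>g x\<bar>) \<le> indicator S x * \<bar>g x\<bar>" .
    qed
    finally show ?thesis .
  qed
  have nb: "real n \<le> 4*R/r + 1"
  proof -
    have "0 \<le> 2*R/h" using h0 rR r0 by simp
    then have "real n = of_int \<lfloor>2*R/h\<rfloor> + 1" by (simp add: n_def)
    also have "\<dots> \<le> 2*R/h + 1" by linarith
    also have "2*R/h = 4*R/r" by (simp add: h_def)
    finally show ?thesis .
  qed
  have "(2 / h) * (\<Sum>i<n. D i) \<le> (2/h) * A" by (rule mult_left_mono[OF sumD]) (use h0 in simp)
  then have "(2 / h) * (\<Sum>i<n. D i) \<le> (4/r) * A" by (simp add: h_def)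
  with c1 c2 nb show ?thesis unfolding A_def S_def by linarith
qed

lemma meas_sub:
  assumes "S \<subseteq> {a..b::real}" "S \<in> sets lebesgue" "a \<le> b"
  shows "measure lebesgue S \<le> b - a"
proof -
  have "measure lebesgue S \<le> measure lebesgue {a..b}"
    by (rule measure_mono_fmeasurable) (use assms in auto)
  then show ?thesis using assms by simp
qed

lemma final_ineq:
  fixes R r \<theta> q K :: real
  assumes r0: "0 < r" and R1: "R < 1" and rR: "r \<le> R powr (1/\<theta>)" and R0: "0 < R"
    and th: "0 < \<theta>" "\<theta> < 1" and q: "0 \<le> q" "q \<le> 1" and K: "0 \<le> K" and rleR: "r \<le> R"
  shows "4*R/r + 1 + (4/r) * (K * (4*R) powr (1 - q)) \<le> (5 + 16*K) * (R/r) powr (1 + \<theta>*q/(1-\<theta>))"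
proof -
  define x where "x = R / r"
  have x1: "1 \<le> x" using rleR r0 by (simp add: x_def)
  define \<gamma> where "\<gamma> = 1 + \<theta>*q/(1-\<theta>)"
  have g1: "1 \<le> \<gamma>" using th q by (simp add: \<gamma>_def)
  have xg: "x \<le> x powr \<gamma>"
  proof -
    have "x powr 1 \<le> x powr \<gamma>" by (rule powr_mono[OF g1 x1])
    then show ?thesis using x1 by simp
  qed
  have p1: "4*R/r + 1 \<le> 5 * x powr \<gamma>"
    using xg x1 by (simp add: x_def)
  have "(4*R) powr (1 - q) = 4 powr (1 - q) * R powr (1 - q)" using R0 by (simp add: powr_mult)
  also have "\<dots> \<le> 4 * R powr (1 - q)"
  proof -
    have "4 powr (1 - q) \<le> 4 powr 1" by (rule powr_mono) (use q in auto)
    then show ?thesis by (intro mult_right_mono) auto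
  qed
  finally have a1: "(4*R) powr (1 - q) \<le> 4 * R powr (1 - q)" .
  have Rq: "R powr (1 - q) = R * R powr (- q)"
  proof -
    have "R powr (1 + - q) = R powr 1 * R powr (- q)" by (rule powr_add)
    then show ?thesis using R0 by simp
  qed
  have key: "R powr (- q) \<le> x powr (\<theta>*q/(1-\<theta>))"
  proof -
    have "R powr (1 - 1/\<theta>) * R powr (1/\<theta>) = R powr ((1 - 1/\<theta>) + 1/\<theta>)"
      by (rule powr_add[symmetric])
    then have id: "R powr (1 - 1/\<theta>) * R powr (1/\<theta>) = R" using R0 by simp
    have "r * R powr (1 - 1/\<theta>) \<le> R powr (1/\<theta>) * R powr (1 - 1/\<theta>)"
      by (rule mult_right_mono[OF rR]) simp
    then have "r * R powr (1 - 1/\<theta>) \<le> R" using id by (simp add: mult.commute)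
    then have base: "R powr (1 - 1/\<theta>) \<le> x" using r0 by (simp add: x_def field_simps)
    have e0: "0 \<le> \<theta>*q/(1-\<theta>)" using th q by simp
    have "(R powr (1 - 1/\<theta>)) powr (\<theta>*q/(1-\<theta>)) \<le> x powr (\<theta>*q/(1-\<theta>))"
      by (rule powr_mono2[OF e0 _ base]) simp
    moreover have "(R powr (1 - 1/\<theta>)) powr (\<theta>*q/(1-\<theta>)) = R powr (- q)"
    proof -
      have "(1 - 1/\<theta>) * (\<theta>*q/(1-\<theta>)) = - q" using th by (simp add: field_simps)
      then show ?thesis by (simp add: powr_powr)
    qed
    ultimately show ?thesis by simp
  qed
  have xx: "x * x powr (\<theta>*q/(1-\<theta>)) = x powr \<gamma>"
  proof -
    have "x powr (1 + \<theta>*q/(1-\<theta>)) = x powr 1 * x powr (\<theta>*q/(1-\<theta>))" by (rule powr_add)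
    then show ?thesis using x1 by (simp add: \<gamma>_def)
  qed
  have "(4/r) * (K * (4*R) powr (1 - q)) \<le> (4/r) * (K * (4 * R powr (1 - q)))"
    using a1 r0 K by (intro mult_left_mono) auto
  also have "\<dots> = 16 * K * x * R powr (- q)" using r0 by (simp add: Rq x_def field_simps)
  also have "\<dots> \<le> 16 * K * x * x powr (\<theta>*q/(1-\<theta>))"
    using key K x1 by (intro mult_left_mono) auto
  also have "\<dots> = 16 * K * x powr \<gamma>" using xx by (simp add: mult.assoc)
  finally have p2: "(4/r) * (K * (4*R) powr (1 - q)) \<le> 16 * K * x powr \<gamma>" .
  show ?thesis using p1 p2 by (simp add: \<gamma>_def x_def algebra_simps)
qed

theorem theorem1p3:
  fixes I :: "real set" and f :: "real \<Rightarrow> real" and p :: ereal and \<theta> :: real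
  assumes "is_interval I"
    and "1 \<le> p"
    and "in_W1p p I f"
    and "continuous_on I f"
    and "0 < \<theta>"
    and "\<theta> < (if p = \<infinity> then 1 else real_of_ereal p / (real_of_ereal p + 1))"
  shows "assouad_reg \<theta> (graph I f)
           \<le> ereal (if p = \<infinity> then 1 else 1 + \<theta> / ((1 - \<theta>) * real_of_ereal p))"
proof -
  note iv = assms(1) and p1 = assms(2) and cf = assms(4) and th0 = assms(5)
  obtain g where wd: "weak_deriv f g I" and gL: "in_Lp p I g"
    using assms(3) unfolding in_W1p_def by blast
  define q where "q = (if p = \<infinity> then 0 else 1 / real_of_ereal p)"
  have th1: "\<theta> < 1" and q0: "0 \<le> q" and q1: "q \<le> 1"
    and geq: "(if p = \<infinity> then 1 else 1 + \<theta> / ((1 - \<theta>) * real_of_ereal p)) = 1 + \<theta>*q/(1-\<theta>)"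
  proof -
    have "\<theta> < 1 \<and> 0 \<le> q \<and> q \<le> 1 \<and> (if p = \<infinity> then 1 else 1 + \<theta> / ((1 - \<theta>) * real_of_ereal p)) = 1 + \<theta>*q/(1-\<theta>)"
    proof (cases "p = \<infinity>")
      case True then show ?thesis using assms(6) by (simp add: q_def)
    next
      case False
      then obtain P where pP: "p = ereal P" using p1 by (cases p) auto
      have P1: "1 \<le> P" using p1 pP by simp
      have "P / (P + 1) < 1" using P1 by simp
      then have t1: "\<theta> < 1" using assms(6) pP by simp
      have "\<theta> / ((1 - \<theta>) * P) = \<theta> * (1 / P) / (1 - \<theta>)" using P1 t1 by (simp add: field_simps)
      then show ?thesis using t1 P1 pP by (simp add: q_def)
    qed
    then show "\<theta> < 1" "0 \<le> q" "q \<le> 1"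
      "(if p = \<infinity> then 1 else 1 + \<theta> / ((1 - \<theta>) * real_of_ereal p)) = 1 + \<theta>*q/(1-\<theta>)" by auto
  qed
  obtain K where K0: "K \<ge> 0" and KB: "\<forall>S L. S \<subseteq> I \<longrightarrow> S \<in> sets lebesgue \<longrightarrow> bounded S \<longrightarrow>
      measure lebesgue S \<le> L \<longrightarrow> 0 < L \<longrightarrow>
      integrable lebesgue (\<lambda>x. indicator S x * \<bar>g x\<bar>) \<and>
      (\<integral>x. indicator S x * \<bar>g x\<bar> \<partial>lebesgue) \<le> K * L powr (1 - q)"
    using Lp_bound[OF iv p1 gL] unfolding q_def by blast
  have IL: "I \<in> sets lebesgue" by (rule interval_lebesgue[OF iv])
  have KB': "integrable lebesgue (\<lambda>x. indicator S x * \<bar>g x\<bar>)"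
    if "S \<subseteq> I" "S \<in> sets lebesgue" "S \<subseteq> {c..d}" "c \<le> d" for S c d
  proof -
    have "bounded S" by (rule bounded_subset[OF _ that(3)]) simp
    moreover have "measure lebesgue S \<le> d - c + 1" using meas_sub[OF that(3,2,4)] by simp
    ultimately show ?thesis using KB that by auto
  qed
  define \<gamma> where "\<gamma> = 1 + \<theta>*q/(1-\<theta>)"
  have g1: "1 \<le> \<gamma>" using th0 th1 q0 by (simp add: \<gamma>_def)
  have mem: "\<gamma> \<in> {\<gamma>::real. \<gamma> > 0 \<and> (\<exists>C>0. \<forall>r R z.
        0 < r \<and> 0 < R \<and> r \<le> R powr (1/\<theta>) \<and> R powr (1/\<theta>) < R \<and> R < 1 \<and> z \<in> graph I f \<longrightarrow>
        real (cover_num (cball z R \<inter> graph I f) r) \<le> C * (R / r) powr \<gamma>)}"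
  proof (intro CollectI conjI exI[of _ "5 + 16*K"] allI impI)
    show "0 < \<gamma>" using g1 by simp
    show "0 < 5 + 16*K" using K0 by simp
    fix r R z
    assume H: "0 < r \<and> 0 < R \<and> r \<le> R powr (1/\<theta>) \<and> R powr (1/\<theta>) < R \<and> R < 1 \<and> z \<in> graph I f"
    then have r0: "0 < r" and R0: "0 < R" and rR: "r \<le> R powr (1/\<theta>)" and R1: "R < 1"
      and rleR: "r \<le> R" and zG: "z \<in> graph I f" by auto
    obtain t0 where t0I: "t0 \<in> I" and z: "z = (t0, f t0)" using zG by (auto simp: graph_def)
    have gint: "integrable lebesgue (\<lambda>x. indicator {a..b} x * \<bar>g x\<bar>)" if "{a..b} \<subseteq> I" for a b
    proof (cases "a \<le> b")
      case True then show ?thesis using KB'[OF that _ order_refl True] by simp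
    next
      case False then show ?thesis by simp
    qed
    have gJ: "integrable lebesgue (\<lambda>x. indicator ({a..<b} \<inter> I) x * \<bar>g x\<bar>)" for a b
    proof (cases "a \<le> b")
      case True
      have s0: "{a..<b} \<in> sets lebesgue" by simp
      have s1: "{a..<b} \<inter> I \<in> sets lebesgue" by (rule sets.Int[OF s0 IL])
      show ?thesis by (rule KB'[OF _ s1 _ True]) auto
    next
      case False then show ?thesis by simp
    qed
    define S where "S = {t0-2*R..t0+2*R} \<inter> I"
    have s0: "{t0-2*R..t0+2*R} \<in> sets lebesgue" by simp
    have SL: "S \<in> sets lebesgue" unfolding S_def by (rule sets.Int[OF s0 IL])
    have Sb: "bounded S" by (rule bounded_subset[of "{t0-2*R..t0+2*R}"]) (auto simp: S_def)
    have Sm: "measure lebesgue S \<le> 4*R"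
      using meas_sub[of S "t0-2*R" "t0+2*R"] SL R0 by (auto simp: S_def)
    have SKB: "integrable lebesgue (\<lambda>x. indicator S x * \<bar>g x\<bar>) \<and>
      (\<integral>x. indicator S x * \<bar>g x\<bar> \<partial>lebesgue) \<le> K * (4*R) powr (1 - q)"
      using KB SL Sb Sm R0 by (auto simp: S_def)
    have gS: "integrable lebesgue (\<lambda>x. indicator ({t0-2*R..t0+2*R} \<inter> I) x * \<bar>g x\<bar>)"
      using SKB unfolding S_def by blast
    have "real (cover_num (cball z R \<inter> graph I f) r)
      \<le> 4*R/r + 1 + (4/r) * (\<integral>x. indicator S x * \<bar>g x\<bar> \<partial>lebesgue)"
      unfolding z S_def
      by (rule cover_main[OF wd cf iv t0I r0 rleR _ gJ gS]) (rule gint)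
    also have "\<dots> \<le> 4*R/r + 1 + (4/r) * (K * (4*R) powr (1 - q))"
      using SKB r0 by (intro add_left_mono mult_left_mono) auto
    also have "\<dots> \<le> (5 + 16*K) * (R/r) powr \<gamma>"
      unfolding \<gamma>_def by (rule final_ineq[OF r0 R1 rR R0 th0 th1 q0 q1 K0 rleR])
    finally show "real (cover_num (cball z R \<inter> graph I f) r) \<le> (5 + 16*K) * (R / r) powr \<gamma>" .
  qed
  have "assouad_reg \<theta> (graph I f) \<le> ereal \<gamma>"
    unfolding assouad_reg_def by (rule INF_lower[OF mem])
  then show ?thesis using geq by (simp add: \<gamma>_def)
qed

end
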